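(* Let $n,r\ge 1$, $V=\mathbb F_2^n$, and for each $1\le i\le r$ let $\rho_i\in\mathrm{Sym}(V)\setminus\mathrm{AGL}(V)$ and $\theta_i\in\mathrm{GL}(V)$. Define $\overline{\rho}_i,\overline\theta_i\in\mathrm{Sym}(V\times V)$ by $(x,y)\overline\rho_i=(x+y,\ y+(x+y)\rho_i)$ and $(x,y)\overline\theta_i=((x+y)\theta_i,\ y)$. If for some index $i\in\{1,\dots,r\}$ the group $\langle\rho_i,T_n\rangle$ (the group generated by the $i$-th round functions $\rho_i\sigma_k$, $k\in V$, of the corresponding substitution permutation network) is primitive on $V$, then the group $$\big\langle \langle\overline\rho_i,\overline\theta_i,T_{2n}\rangle \;\big|\; 1\le i\le r\big\rangle\le\mathrm{Sym}(V\times V)$$ is primitive on $V\times V$.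
   Context: Maps act on the right: $x\rho$ is the image of $x$ under $\rho$. $T_n$ is the group of translations $\sigma_v:x\mapsto x+v$ of $V$, and $T_{2n}$ is the group of translations $(x,y)\mapsto(x+v,y+w)$ of $V\times V$. $\mathrm{AGL}(V)$ is the group of affine permutations of $V$, $\mathrm{GL}(V)$ the group of linear ones. A group $G$ acting on a set $M$ is primitive if it is transitive and there is no $G$-invariant partition of $M$ other than $\{M\}$ and the partition into singletons. *)

theory Defs
  imports Main "HOL-Library.Disjoint_Sets"
begin

text \<open>V = F_2^n is modelled as the type 'n \<Rightarrow> bool for a finite nonempty type 'n
  with n = CARD('n); vector addition over F_2 is pointwise exclusive or.\<close>

type_synonym 'n vec2 = "'n \<Rightarrow> bool"

definition vadd :: "'n vec2 \<Rightarrow> 'n vec2 \<Rightarrow> 'n vec2" where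
  "vadd x y = (\<lambda>i. x i \<noteq> y i)"

definition transl :: "'n vec2 \<Rightarrow> ('n vec2 \<Rightarrow> 'n vec2)" where
  "transl v = (\<lambda>x. vadd x v)"

definition Tn :: "('n vec2 \<Rightarrow> 'n vec2) set" where
  "Tn = range transl"

definition T2n :: "('n vec2 \<times> 'n vec2 \<Rightarrow> 'n vec2 \<times> 'n vec2) set" where
  "T2n = {(\<lambda>(x, y). (vadd x v, vadd y w)) | v w. True}"

definition lin2 :: "('n vec2 \<Rightarrow> 'n vec2) \<Rightarrow> bool" where
  "lin2 f \<longleftrightarrow> (\<forall>x y. f (vadd x y) = vadd (f x) (f y))"

definition GL2 :: "('n vec2 \<Rightarrow> 'n vec2) set" where
  "GL2 = {f. bij f \<and> lin2 f}"

definition AGL2 :: "('n vec2 \<Rightarrow> 'n vec2) set" where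
  "AGL2 = {f. \<exists>L c. L \<in> GL2 \<and> f = (\<lambda>x. vadd (L x) c)}"

inductive_set gen_group :: "('a \<Rightarrow> 'a) set \<Rightarrow> ('a \<Rightarrow> 'a) set" for S where
  gen_id: "id \<in> gen_group S"
| gen_base: "s \<in> S \<Longrightarrow> s \<in> gen_group S"
| gen_comp: "f \<in> gen_group S \<Longrightarrow> g \<in> gen_group S \<Longrightarrow> f \<circ> g \<in> gen_group S"
| gen_inv: "f \<in> gen_group S \<Longrightarrow> inv f \<in> gen_group S"

definition transitive_on_univ :: "('a \<Rightarrow> 'a) set \<Rightarrow> bool" where
  "transitive_on_univ G \<longleftrightarrow> (\<forall>x y. \<exists>g\<in>G. g x = y)"

definition invariant_partition :: "('a \<Rightarrow> 'a) set \<Rightarrow> 'a set set \<Rightarrow> bool" where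
  "invariant_partition G P \<longleftrightarrow> partition_on UNIV P \<and> (\<forall>g\<in>G. \<forall>B\<in>P. g ` B \<in> P)"

definition primitive :: "('a \<Rightarrow> 'a) set \<Rightarrow> bool" where
  "primitive G \<longleftrightarrow> transitive_on_univ G \<and>
     (\<forall>P. invariant_partition G P \<longrightarrow> P = {UNIV} \<or> P = {{x} | x. True})"

definition rhobar :: "('n vec2 \<Rightarrow> 'n vec2) \<Rightarrow> ('n vec2 \<times> 'n vec2 \<Rightarrow> 'n vec2 \<times> 'n vec2)" where
  "rhobar \<rho> = (\<lambda>(x, y). (vadd x y, vadd y (\<rho> (vadd x y))))"

definition thetabar :: "('n vec2 \<Rightarrow> 'n vec2) \<Rightarrow> ('n vec2 \<times> 'n vec2 \<Rightarrow> 'n vec2 \<times> 'n vec2)" where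
  "thetabar \<theta> = (\<lambda>(x, y). (\<theta> (vadd x y), y))"

end

theory Submission
  imports Defs
begin


lemma vadd_comm: "vadd x y = vadd y x" by (auto simp: vadd_def fun_eq_iff)
lemma vadd_assoc: "vadd (vadd x y) w = vadd x (vadd y w)" by (auto simp: vadd_def fun_eq_iff)
lemma vadd_lc: "vadd x (vadd y w) = vadd y (vadd x w)" by (auto simp: vadd_def fun_eq_iff)
lemma vadd_self[simp]: "vadd x x = (\<lambda>_. False)" by (auto simp: vadd_def fun_eq_iff)
lemma vadd_self2[simp]: "vadd x (vadd x y) = y" by (auto simp: vadd_def fun_eq_iff)
lemma vadd_0[simp]: "vadd x (\<lambda>_. False) = x" "vadd (\<lambda>_. False) x = x" by (auto simp: vadd_def fun_eq_iff)
lemma vadd_eq0: "vadd x y = (\<lambda>_. False) \<longleftrightarrow> x = y" by (auto simp: vadd_def fun_eq_iff)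
lemmas vadd_ac = vadd_assoc vadd_comm vadd_lc

lemma gen_group_bij:
  assumes "\<forall>s\<in>S. bij s" "g \<in> gen_group S" shows "bij g"
  using assms(2)
proof induction
  case (gen_comp f g) then show ?case using bij_comp[of g f] by blast
qed (auto simp: assms(1) bij_imp_bij_inv bij_id[unfolded id_def])

lemma gen_group_pres:
  fixes P :: "'a::finite set set"
  assumes S: "\<forall>s\<in>S. bij s \<and> (\<forall>B\<in>P. s ` B \<in> P)" and g: "g \<in> gen_group S"
  shows "\<forall>B\<in>P. g ` B \<in> P"
  using g
proof induction
  case gen_id then show ?case by simp
next
  case (gen_base s) then show ?case using S by blast
next
  case (gen_comp f g) then show ?case by (metis image_comp)
next
  case (gen_inv f)
  have bf: "bij f" using gen_group_bij[OF _ gen_inv.hyps(1)] S by blast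
  have fin: "finite P" by (rule finite_subset[of _ "Pow UNIV"]) auto
  have inj: "inj_on (\<lambda>B. f ` B) P"
    using bf by (auto simp: inj_on_def bij_def inj_image_eq_iff)
  have "(\<lambda>B. f ` B) ` P = P"
    using endo_inj_surj[OF fin _ inj] gen_inv.IH by blast
  show ?case
  proof
    fix B assume "B \<in> P"
    then obtain B' where B': "B' \<in> P" "B = f ` B'"
      using \<open>(\<lambda>B. f ` B) ` P = P\<close> by (metis imageE)
    have "inv f ` B = B'" using B' bf by (simp add: image_comp[symmetric] bij_def inv_o_cancel)
    then show "inv f ` B \<in> P" using B' by simp
  qed
qed



lemma block_subspace:
  fixes \<rho> :: "'n::finite vec2 \<Rightarrow> 'n vec2" and W :: "'n vec2 set"
  assumes prim: "primitive (gen_group (insert \<rho> Tn))" and bij: "bij \<rho>"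
    and z: "(\<lambda>_. False) \<in> W" and cl: "\<And>x y. x \<in> W \<Longrightarrow> y \<in> W \<Longrightarrow> vadd x y \<in> W"
    and blk: "\<And>w a. w \<in> W \<Longrightarrow> vadd (\<rho> (vadd w a)) (\<rho> a) \<in> W"
  shows "W = {\<lambda>_. False} \<or> W = UNIV"
proof -
  define cos where "cos a = {x. vadd x a \<in> W}" for a
  define P where "P = range cos"
  have cosim: "cos a = (\<lambda>w. vadd w a) ` W" for a
  proof (auto simp: cos_def)
    fix x assume "vadd x a \<in> W"
    then show "x \<in> (\<lambda>w. vadd w a) ` W"
      by (rule rev_image_eqI) (simp add: vadd_ac)
  qed (simp add: vadd_ac)
  have card: "card (cos a) = card W" for a
    unfolding cosim by (rule card_image) (auto simp: inj_on_def vadd_ac dest: arg_cong[where f="\<lambda>x. vadd x a"])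
  have self: "a \<in> cos a" for a using z by (simp add: cos_def)
  have same: "cos a = cos b" if "x \<in> cos a" "x \<in> cos b" for a b x
  proof -
    have ab: "vadd a b \<in> W" using cl[OF that[unfolded cos_def, simplified]] by (simp add: vadd_ac)
    show ?thesis
    proof (auto simp: cos_def)
      fix y assume "vadd y a \<in> W"
      from cl[OF this ab] show "vadd y b \<in> W" by (simp add: vadd_ac)
    next
      fix y assume "vadd y b \<in> W"
      from cl[OF this ab] show "vadd y a \<in> W" by (simp add: vadd_ac)
    qed
  qed
  have part: "partition_on UNIV P"
  proof (rule partition_onI)
    show "\<Union>P = UNIV" using self by (auto simp: P_def)
    show "{} \<notin> P" using self by (auto simp: P_def)
    fix p q assume "p \<in> P" "q \<in> P" "p \<noteq> q"
    then show "disjnt p q" using same by (auto simp: P_def disjnt_def)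
  qed
  have trans_im: "transl v ` cos a = cos (vadd a v)" for v a
  proof (auto simp: cos_def transl_def)
    fix y assume "vadd y (vadd a v) \<in> W"
    then show "y \<in> (\<lambda>x. vadd x v) ` {x. vadd x a \<in> W}"
      by (intro rev_image_eqI[of "vadd y v"]) (simp_all add: vadd_ac)
  qed (simp add: vadd_ac)
  have rho_im: "\<rho> ` cos a = cos (\<rho> a)" for a
  proof (rule card_subset_eq)
    show "finite (cos (\<rho> a))" by simp
    show "\<rho> ` cos a \<subseteq> cos (\<rho> a)"
    proof
      fix y assume "y \<in> \<rho> ` cos a"
      then obtain x where x: "vadd x a \<in> W" "y = \<rho> x" by (auto simp: cos_def)
      from blk[OF x(1), of a] show "y \<in> cos (\<rho> a)" by (simp add: cos_def x(2) vadd_ac)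
    qed
    show "card (\<rho> ` cos a) = card (cos (\<rho> a))"
      using card bij card_image[of \<rho> "cos a"] by (simp add: bij_def inj_on_subset[of _ UNIV])
  qed
  have inv: "invariant_partition (gen_group (insert \<rho> Tn)) P"
    unfolding invariant_partition_def
  proof (intro conjI part ballI)
    fix g B assume g: "g \<in> gen_group (insert \<rho> Tn)" and B: "B \<in> P"
    have "\<forall>s\<in>insert \<rho> Tn. bij s \<and> (\<forall>B\<in>P. s ` B \<in> P)"
    proof
      fix s assume "s \<in> insert \<rho> Tn"
      then show "bij s \<and> (\<forall>B\<in>P. s ` B \<in> P)"
      proof
        assume "s = \<rho>" then show ?thesis using bij rho_im by (auto simp: P_def)
      next
        assume "s \<in> Tn"
        then obtain v where s: "s = transl v" by (auto simp: Tn_def)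
        have "bij s" unfolding s transl_def
          by (rule o_bij[of "\<lambda>x. vadd x v"]) (auto simp: fun_eq_iff vadd_ac)
        then show ?thesis using trans_im by (auto simp: P_def s)
      qed
    qed
    from gen_group_pres[OF this g] B show "g ` B \<in> P" by blast
  qed
  have W: "W = cos (\<lambda>_. False)" by (simp add: cos_def)
  have "P = {UNIV} \<or> P = {{x} | x. True}" using prim inv by (auto simp: primitive_def)
  then show ?thesis
  proof
    assume "P = {UNIV}" then show ?thesis using W by (auto simp: P_def)
  next
    assume "P = {{x} | x. True}"
    then have "W \<in> {{x} | x. True}" using W P_def by (metis rangeI)
    then show ?thesis using z by auto
  qed
qed



definition padd :: "'n vec2 \<times> 'n vec2 \<Rightarrow> 'n vec2 \<times> 'n vec2 \<Rightarrow> 'n vec2 \<times> 'n vec2" where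
  "padd p q = (vadd (fst p) (fst q), vadd (snd p) (snd q))"

lemma padd_simp[simp]: "padd (a,b) (c,d) = (vadd a c, vadd b d)" by (simp add: padd_def)
lemma padd_self2[simp]: "padd p (padd p q) = q" by (cases p; cases q) simp
lemma padd_canc[simp]: "padd (padd u p) p = u" by (cases p; cases u) (simp add: vadd_ac)

lemma tr_T2n: "(\<lambda>p. padd p q) \<in> T2n"
  unfolding T2n_def by (cases q) (auto simp: fun_eq_iff)

lemma rinv:
  assumes "bij \<rho>"
  shows "inv (rhobar \<rho>) = (\<lambda>(u,v). (vadd u (vadd v (\<rho> u)), vadd v (\<rho> u)))"
  by (rule inv_unique_comp) (auto simp: fun_eq_iff rhobar_def vadd_ac)

theorem corollary3p4:
  fixes r :: nat
    and \<rho> :: "nat \<Rightarrow> ('n::finite vec2 \<Rightarrow> 'n vec2)"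
    and \<theta> :: "nat \<Rightarrow> ('n vec2 \<Rightarrow> 'n vec2)"
  assumes "r \<ge> 1"
    and rho: "\<And>i. i \<in> {1..r} \<Longrightarrow> bij (\<rho> i) \<and> \<rho> i \<notin> AGL2"
    and theta: "\<And>i. i \<in> {1..r} \<Longrightarrow> \<theta> i \<in> GL2"
    and prim: "\<exists>i\<in>{1..r}. primitive (gen_group (insert (\<rho> i) Tn))"
  shows "primitive (gen_group (\<Union>i\<in>{1..r}. gen_group ({rhobar (\<rho> i), thetabar (\<theta> i)} \<union> T2n)))"
proof -
  obtain i0 where i0: "i0 \<in> {1..r}" and pr: "primitive (gen_group (insert (\<rho> i0) Tn))" using prim by blast
  define p0 where "p0 = \<rho> i0"
  define t0 where "t0 = \<theta> i0"
  define G where "G = gen_group (\<Union>i\<in>{1..r}. gen_group ({rhobar (\<rho> i), thetabar (\<theta> i)} \<union> T2n))"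
  have bij0: "bij p0" and naff: "p0 \<notin> AGL2" using rho[OF i0] by (auto simp: p0_def)
  have inG: "s \<in> G" if "s \<in> {rhobar p0, thetabar t0} \<union> T2n" for s
    unfolding G_def using i0 that by (auto simp: p0_def t0_def intro!: gen_group.gen_base)
  have trG: "(\<lambda>p. padd p q) \<in> G" for q using inG tr_T2n by blast
  have rG: "rhobar p0 \<in> G" and tG: "thetabar t0 \<in> G" using inG by auto
  have riG: "(\<lambda>(u,v). (vadd u (vadd v (p0 u)), vadd v (p0 u))) \<in> G"
    using gen_group.gen_inv[OF rG[unfolded G_def]] rinv[OF bij0] by (simp add: G_def)
  define z :: "'n vec2" where "z = (\<lambda>_. False)"
  show ?thesis unfolding G_def[symmetric] primitive_def
  proof (intro conjI allI impI)
    show "transitive_on_univ G" unfolding transitive_on_univ_def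
    proof (intro allI)
      fix x y :: "'n vec2 \<times> 'n vec2"
      have "padd x (padd x y) = y" by simp
      then show "\<exists>g\<in>G. g x = y" using trG[of "padd x y"] by (intro bexI[of _ "\<lambda>p. padd p (padd x y)"]) auto
    qed
  next
    fix P assume ip: "invariant_partition G P"
    have part: "partition_on UNIV P" and pinv: "\<And>g B. g \<in> G \<Longrightarrow> B \<in> P \<Longrightarrow> g ` B \<in> P"
      using ip by (auto simp: invariant_partition_def)
    have uniq: "B = B'" if "B \<in> P" "B' \<in> P" "x \<in> B" "x \<in> B'" for B B' x
      using disjointD[OF partition_onD2[OF part] that(1,2)] that(3,4) by blast
    have nonempty: "B \<noteq> {}" if "B \<in> P" for B using partition_onD3[OF part] that by auto
    obtain U where U: "U \<in> P" "(z,z) \<in> U" using partition_onD1[OF part] by blast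
    have blockof: "B = (\<lambda>p. padd p q) ` U" if "B \<in> P" "q \<in> B" for B q
    proof (rule uniq[OF that(1) pinv[OF trG U(1)] that(2)])
      show "q \<in> (\<lambda>p. padd p q) ` U" using U(2) by (intro rev_image_eqI[of "(z,z)"]) (auto simp: z_def padd_def)
    qed
    have star: "padd (g (padd u p)) (g p) \<in> U" if "g \<in> G" "u \<in> U" for g u p
    proof -
      have B: "g ` (\<lambda>x. padd x p) ` U \<in> P" using pinv[OF that(1) pinv[OF trG U(1)]] .
      have "g p \<in> g ` (\<lambda>x. padd x p) ` U" using U(2) by (intro imageI rev_image_eqI[of "(z,z)"]) (auto simp: z_def padd_def)
      from blockof[OF B this] have "g (padd u p) \<in> (\<lambda>x. padd x (g p)) ` U" using that(2) by blast
      then show ?thesis by auto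
    qed
    have cl: "padd u u' \<in> U" if "u \<in> U" "u' \<in> U" for u u'
      using blockof[OF U(1) that(2)] that(1) by blast
    have clp: "(vadd a c, vadd b d) \<in> U" if "(a,b) \<in> U" "(c,d) \<in> U" for a b c d
      using cl[OF that] by simp
    define D where "D s u = vadd (p0 (vadd u s)) (p0 s)" for s u
    have R: "(y, D s (vadd x y)) \<in> U" if "(x,y) \<in> U" for x y s
    proof -
      have "padd (rhobar p0 (padd (x,y) (s,z))) (rhobar p0 (s,z)) \<in> U" by (rule star[OF rG that])
      then have "(vadd x y, vadd y (D s (vadd x y))) \<in> U" by (simp add: rhobar_def D_def z_def vadd_ac)
      from clp[OF this that] show ?thesis by (simp add: vadd_ac)
    qed
    have Ri: "(vadd v (D a u), D a u) \<in> U" if "(u,v) \<in> U" for u v a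
    proof -
      have "padd ((\<lambda>(u,v). (vadd u (vadd v (p0 u)), vadd v (p0 u))) (padd (u,v) (a,z)))
              ((\<lambda>(u,v). (vadd u (vadd v (p0 u)), vadd v (p0 u))) (a,z)) \<in> U" by (rule star[OF riG that])
      then have "(vadd u (vadd v (D a u)), vadd v (D a u)) \<in> U" by (simp add: D_def z_def vadd_ac)
      from clp[OF this that] show ?thesis by (simp add: vadd_ac)
    qed
    have Th: "(z, e) \<in> U" if "(e,e) \<in> U" for e
    proof -
      have "padd (thetabar t0 (padd (e,e) (z,z))) (thetabar t0 (z,z)) \<in> U" by (rule star[OF tG that])
      then show ?thesis by (simp add: thetabar_def z_def)
    qed
    have Dz: "D a z = z" for a by (simp add: D_def z_def)
    define Q where "Q = {x. \<exists>y. (x,y) \<in> U}"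
    have "Q = {z} \<or> Q = UNIV" unfolding z_def
    proof (rule block_subspace[OF pr bij0[unfolded p0_def]])
      show "(\<lambda>_. False) \<in> Q" using U(2) by (auto simp: Q_def z_def)
      show "vadd x y \<in> Q" if "x \<in> Q" "y \<in> Q" for x y using that clp unfolding Q_def by blast
      show "vadd (\<rho> i0 (vadd w a)) (\<rho> i0 a) \<in> Q" if w: "w \<in> Q" for w a
      proof -
        obtain v where "(w,v) \<in> U" using w by (auto simp: Q_def)
        from R[OF Ri[OF this]] show ?thesis by (auto simp: Q_def D_def p0_def)
      qed
    qed
    then show "P = {UNIV} \<or> P = {{x} | x. True}"
    proof
      assume Q: "Q = {z}"
      have Us: "U = {(z,z)}"
      proof -
        have H: "x = z \<and> y = z" if "(x,y) \<in> U" for x y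
        proof -
          have "x = z" using that Q by (auto simp: Q_def)
          moreover have "y = z" using R[OF that] Q by (auto simp: Q_def)
          ultimately show ?thesis by simp
        qed
        show ?thesis
        proof
          show "U \<subseteq> {(z,z)}"
          proof
            fix p assume p: "p \<in> U"
            obtain a b where ab: "p = (a,b)" by fastforce
            from H[of a b] p ab show "p \<in> {(z,z)}" by simp
          qed
        qed (use U(2) in simp)
      qed
      have sing: "B = {q}" if "B \<in> P" "q \<in> B" for B q
      proof -
        have "B = (\<lambda>p. padd p q) ` {(z,z)}" using blockof[OF that] Us by simp
        then show ?thesis by (simp add: z_def padd_def)
      qed
      have "P = {{x} | x. True}"
      proof (rule set_eqI, rule iffI)
        fix B assume "B \<in> P"
        moreover obtain q where "q \<in> B" using nonempty[OF \<open>B \<in> P\<close>] by auto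
        ultimately have "B = {q}" using sing by blast
        then show "B \<in> {{x} | x. True}" by blast
      next
        fix B :: "('n vec2 \<times> 'n vec2) set" assume "B \<in> {{x} | x. True}"
        then obtain x :: "'n vec2 \<times> 'n vec2" where Bx: "B = {x}" by blast
        obtain B' where "B' \<in> P" "x \<in> B'" using partition_onD1[OF part] by blast
        then have "B' = {x}" using sing by blast
        then show "B \<in> P" using \<open>B' \<in> P\<close> Bx by simp
      qed
      then show ?thesis by simp
    next
      assume Q: "Q = UNIV"
      define K where "K = {x. (x,z) \<in> U}"
      have "K = {z} \<or> K = UNIV" unfolding z_def
      proof (rule block_subspace[OF pr bij0[unfolded p0_def]])
        show "(\<lambda>_. False) \<in> K" using U(2) by (auto simp: K_def z_def)
        show "vadd x y \<in> K" if "x \<in> K" "y \<in> K" for x y using that clp[of x z y z] by (auto simp: K_def z_def)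
        show "vadd (\<rho> i0 (vadd w a)) (\<rho> i0 a) \<in> K" if "w \<in> K" for w a
        proof -
          have "(z, D a w) \<in> U" using R[of w z a] that by (simp add: K_def z_def)
          from Ri[OF this, of z] show ?thesis by (simp add: Dz K_def D_def p0_def z_def)
        qed
      qed
      then show ?thesis
      proof
        assume K: "K = UNIV"
        have UU: "U = UNIV"
        proof (auto)
          fix x y
          define w where "w = inv p0 (vadd y (p0 z))"
          have "(w,z) \<in> U" using K by (auto simp: K_def)
          from R[OF this, of z] have "(z, y) \<in> U"
            using bij0 by (simp add: D_def w_def z_def bij_inv_eq_iff vadd_ac bij_is_surj surj_f_inv_f)
          moreover have "(x,z) \<in> U" using K by (auto simp: K_def)
          ultimately show "(x,y) \<in> U" using clp[of x z z y] by (simp add: z_def)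
        qed
        have allU: "B = UNIV" if hB: "B \<in> P" for B
        proof -
          obtain q where "q \<in> B" using nonempty[OF hB] by blast
          then show ?thesis using uniq[OF hB U(1)] UU by blast
        qed
        have "P = {UNIV}"
        proof (rule set_eqI, rule iffI)
          fix B assume "B \<in> P" then show "B \<in> {UNIV}" using allU by blast
        next
          fix B :: "('n vec2 \<times> 'n vec2) set" assume "B \<in> {UNIV}"
          then show "B \<in> P" using U(1) UU by simp
        qed
        then show ?thesis by simp
      next
        assume K: "K = {z}"
        have Dc: "D a u = D z u" for a u
        proof -
          obtain v where v: "(u,v) \<in> U" using Q by (auto simp: Q_def)
          define e where "e = vadd (D a u) (D z u)"
          have "(e,e) \<in> U" using clp[OF Ri[OF v, of a] Ri[OF v, of z]] by (simp add: e_def vadd_ac)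
          from Ri[OF Th[OF this], of z] have "(e, z) \<in> U" using Dz[of z] by (simp add: z_def)
          then have "e = z" using K by (auto simp: K_def)
          then show ?thesis by (simp add: e_def z_def vadd_eq0)
        qed
        define L where "L x = vadd (p0 x) (p0 z)" for x
        have "p0 \<in> AGL2" unfolding AGL2_def
        proof (intro CollectI exI conjI)
          show "p0 = (\<lambda>x. vadd (L x) (p0 z))" by (simp add: L_def fun_eq_iff vadd_ac)
          have "bij L" unfolding L_def
            using bij_comp[OF bij0 o_bij[of "\<lambda>x. vadd x (p0 z)" "\<lambda>x. vadd x (p0 z)"]]
            by (simp add: o_def fun_eq_iff vadd_ac)
          moreover have "lin2 L" unfolding lin2_def
          proof (intro allI)
            fix x y
            have "D y x = D z x" by (rule Dc)
            then have "vadd (p0 (vadd x y)) (p0 y) = vadd (p0 x) (p0 z)" by (simp add: D_def z_def)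
            then have "p0 (vadd x y) = vadd (p0 y) (vadd (p0 x) (p0 z))"
              by (metis vadd_self2 vadd_comm)
            then show "L (vadd x y) = vadd (L x) (L y)" by (simp add: L_def vadd_ac)
          qed
          ultimately show "L \<in> GL2" by (simp add: GL2_def)
        qed
        with naff show ?thesis by blast
      qed
    qed
  qed
qed

end
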